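(* Assume that $H: [0,1]\to\mathbb{R}$ is upper semi-continuous. Let $\widehat H$ be the concave envelope of $H$. Then: (a) If $\liminf_{t\to1}{H(t)-H(1)\over t-1}>-\infty$, then $\widehat H^\prime(1-)>-\infty$. (b) If $\limsup_{t\to0}{H(t)-H(0)\over t}<\infty$, then $\widehat H^\prime(0)<\infty$.
   Context: The concave envelope $\widehat H$ of $H$ is defined by $\widehat H(s)=\inf\{G(s)\mid G\text{ is concave and }G\ge H\text{ on }[0,1]\}$, $s\in[0,1]$. Primes denote right derivatives; $\widehat H'(1-)$ is the left limit at $1$ of the right derivative. *)

theory Defs
  imports "HOL-Analysis.Analysis" "HOL-Library.Liminf_Limsup"
begin

definition usc_on :: "real set \<Rightarrow> (real \<Rightarrow> real) \<Rightarrow> bool" where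
  "usc_on S f \<longleftrightarrow> (\<forall>x\<in>S. \<forall>e>0. \<forall>\<^sub>F y in at x within S. f y < f x + e)"

definition concave_envelope :: "(real \<Rightarrow> real) \<Rightarrow> real \<Rightarrow> real" where
  "concave_envelope H s =
     Inf {G s | G. concave_on {0..1} G \<and> (\<forall>x\<in>{0..1}. H x \<le> G x)}"

definition right_deriv :: "(real \<Rightarrow> real) \<Rightarrow> real \<Rightarrow> ereal" where
  "right_deriv f x = Lim (at_right x) (\<lambda>t. ereal ((f t - f x) / (t - x)))"

end

theory Submission
  imports Defs
begin

lemma mono_right_lim:
  fixes f :: "real \<Rightarrow> ereal"
  assumes ab: "a < b" and mono: "\<And>x y. a < x \<Longrightarrow> x \<le> y \<Longrightarrow> y < b \<Longrightarrow> f y \<le> f x"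
  shows "Lim (at_right a) f = (SUP x\<in>{a<..<b}. f x)"
proof (rule tendsto_Lim[OF trivial_limit_at_right_real], rule order_tendstoI)
  fix y assume "y < (SUP x\<in>{a<..<b}. f x)"
  then obtain x0 where x0: "x0 \<in> {a<..<b}" "y < f x0" by (auto simp: less_SUP_iff)
  show "\<forall>\<^sub>F x in at_right a. y < f x"
    unfolding eventually_at_right_field
    using x0 mono by (intro exI[of _ x0]) (auto intro: less_le_trans)
next
  fix y assume y: "(SUP x\<in>{a<..<b}. f x) < y"
  show "\<forall>\<^sub>F x in at_right a. f x < y"
    unfolding eventually_at_right_field
  proof (intro exI[of _ b] conjI allI impI)
    fix x assume "a < x" "x < b"
    then have "f x \<le> (SUP x\<in>{a<..<b}. f x)" by (intro SUP_upper) auto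
    then show "f x < y" using y by auto
  qed (rule ab)
qed

lemma mono_left_lim:
  fixes f :: "real \<Rightarrow> ereal"
  assumes ab: "a < b" and mono: "\<And>x y. a < x \<Longrightarrow> x \<le> y \<Longrightarrow> y < b \<Longrightarrow> f y \<le> f x"
  shows "Lim (at_left b) f = (INF x\<in>{a<..<b}. f x)"
proof (rule tendsto_Lim[OF trivial_limit_at_left_real], rule order_tendstoI)
  fix y assume "(INF x\<in>{a<..<b}. f x) < y"
  then obtain x0 where x0: "x0 \<in> {a<..<b}" "f x0 < y" by (auto simp: INF_less_iff)
  show "\<forall>\<^sub>F x in at_left b. f x < y"
    unfolding eventually_at_left_field
    using x0 mono by (intro exI[of _ x0]) (meson le_less_trans less_imp_le greaterThanLessThan_iff)
next
  fix y assume y: "y < (INF x\<in>{a<..<b}. f x)"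
  show "\<forall>\<^sub>F x in at_left b. y < f x"
    unfolding eventually_at_left_field
  proof (intro exI[of _ a] conjI allI impI)
    fix x assume "a < x" "x < b"
    then have "f x \<ge> (INF x\<in>{a<..<b}. f x)" by (intro INF_lower) auto
    then show "y < f x" using y by auto
  qed (rule ab)
qed

lemma usc_bounded:
  assumes usc: "usc_on {0..1} H"
  shows "\<exists>M. \<forall>x\<in>{0..1::real}. H x \<le> M"
proof -
  have "\<forall>x\<in>{0..1}. \<exists>d>0. \<forall>y\<in>{0..1}. dist y x < d \<longrightarrow> H y < H x + 1"
  proof
    fix x :: real assume x: "x \<in> {0..1}"
    with usc have "\<forall>\<^sub>F y in at x within {0..1}. H y < H x + 1" unfolding usc_on_def by auto
    then obtain d where "d > 0" "\<forall>y\<in>{0..1}. y \<noteq> x \<and> dist y x < d \<longrightarrow> H y < H x + 1"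
      unfolding eventually_at by auto
    then show "\<exists>d>0. \<forall>y\<in>{0..1}. dist y x < d \<longrightarrow> H y < H x + 1"
      by (metis less_add_one)
  qed
  then obtain d where d: "\<And>x. x\<in>{0..1::real} \<Longrightarrow> d x > 0 \<and> (\<forall>y\<in>{0..1}. dist y x < d x \<longrightarrow> H y < H x + 1)"
    by metis
  have "compact {0..1::real}" by simp
  moreover have "{0..1::real} \<subseteq> (\<Union>x\<in>{0..1}. ball x (d x))" using d by force
  ultimately obtain T where T: "T \<subseteq> {0..1}" "finite T" "{0..1::real} \<subseteq> (\<Union>x\<in>T. ball x (d x))"
    using compactE_image[of "{0..1::real}" "{0..1}" "\<lambda>x. ball x (d x)"] by auto
  show ?thesis
  proof (intro exI ballI)
    fix y :: real assume y: "y \<in> {0..1}"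
    then obtain x where x: "x \<in> T" "y \<in> ball x (d x)" using T by auto
    then have "H y < H x + 1" using d[of x] T y by (auto simp: dist_commute)
    also have "H x + 1 \<le> Max ((\<lambda>x. H x + 1) ` T)" using x T by (intro Max_ge) auto
    finally show "H y \<le> Max ((\<lambda>x. H x + 1) ` T)" by simp
  qed
qed

lemma concave_three:
  fixes E :: "real \<Rightarrow> real"
  assumes cc: "concave_on {0..1} E" and abc: "0 \<le> a" "a < b" "b < c" "c \<le> 1"
  shows "E b * (c - a) \<ge> (c - b) * E a + (b - a) * E c"
proof -
  define t where "t = (b - a) / (c - a)"
  have t: "0 \<le> t" "t \<le> 1" using abc by (auto simp: t_def field_simps)
  have tc: "t * (c - a) = b - a" using abc by (simp add: t_def)
  have "(1 - t) * a + t * c = a + t * (c - a)" by (simp add: algebra_simps)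
  then have "(1 - t) * a + t * c = b" using tc by simp
  then have "E b \<ge> (1 - t) * E a + t * E c"
    using concave_onD[OF cc t, of a c] abc by simp
  then have "E b * (c - a) \<ge> ((1 - t) * E a + t * E c) * (c - a)"
    using abc by (intro mult_right_mono) auto
  also have "((1 - t) * E a + t * E c) * (c - a) = ((1 - t) * (c - a)) * E a + (t * (c - a)) * E c"
    by (simp add: algebra_simps)
  also have "(1 - t) * (c - a) = c - b" using tc by (simp add: algebra_simps)
  finally have "E b * (c - a) \<ge> (c - b) * E a + (t * (c - a)) * E c" .
  then show ?thesis using tc by simp
qed

lemma slope1:
  fixes E :: "real \<Rightarrow> real"
  assumes cc: "concave_on {0..1} E" and abc: "0 \<le> a" "a < b" "b < c" "c \<le> 1"
  shows "(E c - E a) / (c - a) \<le> (E b - E a) / (b - a)"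
  using concave_three[OF assms] abc by (simp add: divide_simps) argo

lemma slope2:
  fixes E :: "real \<Rightarrow> real"
  assumes cc: "concave_on {0..1} E" and abc: "0 \<le> a" "a < b" "b < c" "c \<le> 1"
  shows "(E c - E b) / (c - b) \<le> (E c - E a) / (c - a)"
  using concave_three[OF assms] abc by (simp add: divide_simps) argo

lemma env_basic:
  assumes usc: "usc_on {0..1} H"
  shows env_nonempty: "{G s | G. concave_on {0..1} G \<and> (\<forall>x\<in>{0..1}. H x \<le> G x)} \<noteq> {}"
    and env_bdd: "s \<in> {0..1} \<Longrightarrow> bdd_below {G s | G. concave_on {0..1} G \<and> (\<forall>x\<in>{0..1}. H x \<le> G x)}"
proof -
  obtain M where M: "\<forall>x\<in>{0..1::real}. H x \<le> M" using usc_bounded[OF usc] by auto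
  have "concave_on {0..1::real} (\<lambda>_. M)" by (auto simp: concave_on_iff convex_real_interval algebra_simps simp flip: distrib_right)
  then show "{G s | G. concave_on {0..1} G \<and> (\<forall>x\<in>{0..1}. H x \<le> G x)} \<noteq> {}"
    using M by blast
  show "s \<in> {0..1} \<Longrightarrow> bdd_below {G s | G. concave_on {0..1} G \<and> (\<forall>x\<in>{0..1}. H x \<le> G x)}"
    by (rule bdd_belowI[of _ "H s"]) auto
qed

lemma env_ge:
  assumes usc: "usc_on {0..1} H" and s: "s \<in> {0..1}"
  shows "H s \<le> concave_envelope H s"
  unfolding concave_envelope_def
  by (rule cInf_greatest[OF env_nonempty[OF usc]]) (use s in auto)

lemma env_le:
  assumes usc: "usc_on {0..1} H" and s: "s \<in> {0..1}"
    and G: "concave_on {0..1} G" "\<forall>x\<in>{0..1}. H x \<le> G x"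
  shows "concave_envelope H s \<le> G s"
  unfolding concave_envelope_def
  by (rule cInf_lower[OF _ env_bdd[OF usc s]]) (use G in auto)

lemma env_concave:
  assumes usc: "usc_on {0..1} H"
  shows "concave_on {0..1} (concave_envelope H)"
  unfolding concave_on_iff
proof (intro conjI ballI allI impI)
  show "convex {0..1::real}" by simp
  fix x y u v :: real assume xy: "x \<in> {0..1}" "y \<in> {0..1}" and uv: "0 \<le> u" "0 \<le> v" "u + v = 1"
  show "u * concave_envelope H x + v * concave_envelope H y \<le> concave_envelope H (u *\<^sub>R x + v *\<^sub>R y)"
    unfolding concave_envelope_def[of H "u *\<^sub>R x + v *\<^sub>R y"]
  proof (rule cInf_greatest[OF env_nonempty[OF usc]])
    fix w assume "w \<in> {G (u *\<^sub>R x + v *\<^sub>R y) | G. concave_on {0..1} G \<and> (\<forall>x\<in>{0..1}. H x \<le> G x)}"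
    then obtain G where G: "concave_on {0..1} G" "\<forall>x\<in>{0..1}. H x \<le> G x" and w: "w = G (u *\<^sub>R x + v *\<^sub>R y)"
      by auto
    have "u * concave_envelope H x + v * concave_envelope H y \<le> u * G x + v * G y"
      using env_le[OF usc xy(1) G] env_le[OF usc xy(2) G] uv
      by (intro add_mono mult_left_mono) auto
    also have "\<dots> \<le> w" using G(1) xy uv unfolding w concave_on_iff by auto
    finally show "u * concave_envelope H x + v * concave_envelope H y \<le> w" .
  qed
qed

lemma affine_concave: "concave_on {0..1::real} (\<lambda>x. A + B * x)"
  unfolding concave_on_iff
proof (intro conjI ballI allI impI)
  fix x y u v :: real assume "u + v = 1"
  then have "A = u * A + v * A" by (metis distrib_right mult_1)
  then show "u * (A + B * x) + v * (A + B * y) \<le> A + B * (u *\<^sub>R x + v *\<^sub>R y)"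
    by (simp add: algebra_simps)
qed simp

lemma partB:
  fixes H :: "real \<Rightarrow> real"
  assumes usc: "usc_on {0..1} H"
    and ls: "Limsup (at_right 0) (\<lambda>t. ereal ((H t - H 0) / t)) < \<infinity>"
  shows "right_deriv (concave_envelope H) 0 < \<infinity>"
proof -
  define E where "E = concave_envelope H"
  obtain C where C: "Limsup (at_right 0) (\<lambda>t. ereal ((H t - H 0) / t)) < ereal C"
    using ereal_dense2[OF ls] by auto
  have "\<forall>\<^sub>F t in at_right 0. ereal ((H t - H 0) / t) < ereal C"
    by (rule Limsup_lessD[OF C])
  then obtain b where b: "b > 0" "\<And>y. y > 0 \<Longrightarrow> y < b \<Longrightarrow> (H y - H 0) / y < C"
    unfolding eventually_at_right_field by auto
  define d where "d = min b 1"
  have d: "d > 0" "d \<le> 1" "d \<le> b" using b by (auto simp: d_def)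
  obtain M where M: "\<forall>x\<in>{0..1::real}. H x \<le> M" using usc_bounded[OF usc] by auto
  define K where "K = max 0 (max C ((M - H 0) / d))"
  have K: "K \<ge> 0" "K \<ge> C" "K \<ge> (M - H 0) / d" by (auto simp: K_def)
  have maj: "\<forall>x\<in>{0..1}. H x \<le> H 0 + K * x"
  proof
    fix x :: real assume x: "x \<in> {0..1}"
    consider "x = 0" | "0 < x" "x < d" | "d \<le> x" using x by force
    then show "H x \<le> H 0 + K * x"
    proof cases
      case 2
      then have "(H x - H 0) / x < C" using b d by auto
      then have "H x - H 0 < C * x" using 2 by (simp add: pos_divide_less_eq)
      moreover have "C * x \<le> K * x" using K 2 by (intro mult_right_mono) auto
      ultimately show ?thesis by simp
    next
      case 3
      have "M - H 0 \<le> K * d" using K d by (simp add: pos_divide_le_eq)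
      also have "K * d \<le> K * x" using K 3 by (intro mult_left_mono) auto
      finally show ?thesis using M x by (smt (verit) atLeastAtMost_iff)
    qed simp
  qed
  have Ele: "\<And>x. x \<in> {0..1} \<Longrightarrow> E x \<le> H 0 + K * x"
    unfolding E_def using env_le[OF usc _ affine_concave maj] by simp
  have E0: "E 0 = H 0" using Ele[of 0] env_ge[OF usc, of 0] unfolding E_def by simp
  have cc: "concave_on {0..1} E" unfolding E_def by (rule env_concave[OF usc])
  have "right_deriv E 0 = (SUP t\<in>{0<..<1}. ereal ((E t - E 0) / (t - 0)))"
    unfolding right_deriv_def
  proof (rule mono_right_lim)
    fix x y :: real assume xy: "0 < x" "x \<le> y" "y < 1"
    show "ereal ((E y - E 0) / (y - 0)) \<le> ereal ((E x - E 0) / (x - 0))"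
    proof (cases "x = y")
      case False
      then show ?thesis using slope1[OF cc, of 0 x y] xy by simp
    qed simp
  qed simp
  also have "\<dots> \<le> ereal K"
  proof (rule SUP_least)
    fix t :: real assume t: "t \<in> {0<..<1}"
    then have "E t - E 0 \<le> K * t" using Ele[of t] E0 by auto
    then have "(E t - E 0) / (t - 0) \<le> K" using t by (simp add: pos_divide_le_eq)
    then show "ereal ((E t - E 0) / (t - 0)) \<le> ereal K" by simp
  qed
  finally have "right_deriv E 0 \<le> ereal K" .
  then show ?thesis unfolding E_def by (rule le_less_trans) simp
qed

lemma partA:
  fixes H :: "real \<Rightarrow> real"
  assumes usc: "usc_on {0..1} H"
    and li: "Liminf (at_left 1) (\<lambda>t. ereal ((H t - H 1) / (t - 1))) > -\<infinity>"
  shows "Lim (at_left 1) (\<lambda>s. right_deriv (concave_envelope H) s) > -\<infinity>"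
proof -
  define E where "E = concave_envelope H"
  obtain c where c: "ereal c < Liminf (at_left 1) (\<lambda>t. ereal ((H t - H 1) / (t - 1)))"
    using ereal_dense2[OF li] by auto
  have "\<forall>\<^sub>F t in at_left 1. ereal c < ereal ((H t - H 1) / (t - 1))"
    by (rule less_LiminfD[OF c])
  then obtain b where b: "b < 1" "\<And>y. y > b \<Longrightarrow> y < 1 \<Longrightarrow> c < (H y - H 1) / (y - 1)"
    unfolding eventually_at_left_field by auto
  define d where "d = max b 0"
  have d: "d < 1" "d \<ge> 0" "d \<ge> b" using b by (auto simp: d_def)
  obtain M where M: "\<forall>x\<in>{0..1::real}. H x \<le> M" using usc_bounded[OF usc] by auto
  define K where "K = max 0 (max (-c) ((M - H 1) / (1 - d)))"
  have K: "K \<ge> 0" "K \<ge> -c" "K \<ge> (M - H 1) / (1 - d)" by (auto simp: K_def)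
  have maj: "\<forall>x\<in>{0..1}. H x \<le> (H 1 + K) + (-K) * x"
  proof
    fix x :: real assume x: "x \<in> {0..1}"
    consider "x = 1" | "d < x" "x < 1" | "x \<le> d" using x by force
    then show "H x \<le> (H 1 + K) + (-K) * x"
    proof cases
      case 2
      then have "c < (H x - H 1) / (x - 1)" using b d by auto
      then have "H x - H 1 < c * (x - 1)" using 2 by (simp add: neg_less_divide_eq)
      moreover have "c * (x - 1) = (-c) * (1 - x)" by (simp add: algebra_simps)
      moreover have "(-c) * (1 - x) \<le> K * (1 - x)" using K 2 by (intro mult_right_mono) auto
      moreover have "K * (1 - x) = K - K * x" by (simp add: right_diff_distrib)
      ultimately show ?thesis by linarith
    next
      case 3
      have "M - H 1 \<le> K * (1 - d)" using K d by (simp add: pos_divide_le_eq)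
      also have "K * (1 - d) \<le> K * (1 - x)" using K 3 by (intro mult_left_mono) auto
      finally have "M - H 1 \<le> K * (1 - x)" .
      moreover have "K * (1 - x) = K - K * x" by (simp add: right_diff_distrib)
      moreover have "H x \<le> M" using M x by blast
      ultimately show ?thesis by linarith
    qed simp
  qed
  have Ele: "\<And>x. x \<in> {0..1} \<Longrightarrow> E x \<le> H 1 + K * (1 - x)"
  proof -
    fix x :: real assume x: "x \<in> {0..1}"
    have "E x \<le> (H 1 + K) + (-K) * x" unfolding E_def by (rule env_le[OF usc x affine_concave maj])
    moreover have "K * (1 - x) = K - K * x" by (simp add: right_diff_distrib)
    ultimately show "E x \<le> H 1 + K * (1 - x)" by linarith
  qed
  have E1: "E 1 = H 1" using Ele[of 1] env_ge[OF usc, of 1] unfolding E_def by simp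
  have cc: "concave_on {0..1} E" unfolding E_def by (rule env_concave[OF usc])
  have RD: "right_deriv E s = (SUP t\<in>{s<..<1}. ereal ((E t - E s) / (t - s)))"
    if s: "0 < s" "s < 1" for s
    unfolding right_deriv_def
  proof (rule mono_right_lim)
    fix x y :: real assume xy: "s < x" "x \<le> y" "y < 1"
    show "ereal ((E y - E s) / (y - s)) \<le> ereal ((E x - E s) / (x - s))"
    proof (cases "x = y")
      case False
      then show ?thesis using slope1[OF cc, of s x y] xy s by simp
    qed simp
  qed (use s in simp)
  have low: "right_deriv E s \<ge> ereal (-K)" if s: "0 < s" "s < 1" for s
  proof -
    define m where "m = (s + 1) / 2"
    have m: "s < m" "m < 1" using s by (auto simp: m_def)
    have "E s \<le> H 1 + K * (1 - s)" using Ele[of s] s by simp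
    then have "E 1 - E s \<ge> -K * (1 - s)" using E1 by simp
    then have "-K \<le> (E 1 - E s) / (1 - s)" using s by (simp add: pos_le_divide_eq)
    also have "\<dots> \<le> (E m - E s) / (m - s)" using slope1[OF cc, of s m 1] s m by simp
    finally have "ereal (-K) \<le> ereal ((E m - E s) / (m - s))" by simp
    also have "\<dots> \<le> (SUP t\<in>{s<..<1}. ereal ((E t - E s) / (t - s)))"
      using m by (intro SUP_upper) auto
    finally show ?thesis using RD[OF s] by simp
  qed
  have "Lim (at_left 1) (\<lambda>s. right_deriv E s) = (INF s\<in>{0<..<1}. right_deriv E s)"
  proof (rule mono_left_lim)
    fix x y :: real assume xy: "0 < x" "x \<le> y" "y < 1"
    show "right_deriv E y \<le> right_deriv E x"
    proof (cases "x = y")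
      case False
      have "right_deriv E y = (SUP t\<in>{y<..<1}. ereal ((E t - E y) / (t - y)))" using RD xy by simp
      also have "\<dots> \<le> (SUP t\<in>{x<..<1}. ereal ((E t - E x) / (t - x)))"
      proof (rule SUP_least)
        fix t assume t: "t \<in> {y<..<1}"
        have "ereal ((E t - E y) / (t - y)) \<le> ereal ((E t - E x) / (t - x))"
          using slope2[OF cc, of x y t] xy t False by simp
        also have "\<dots> \<le> (SUP t\<in>{x<..<1}. ereal ((E t - E x) / (t - x)))"
          using t xy by (intro SUP_upper) auto
        finally show "ereal ((E t - E y) / (t - y)) \<le> (SUP t\<in>{x<..<1}. ereal ((E t - E x) / (t - x)))" .
      qed
      also have "\<dots> = right_deriv E x" using RD xy by simp
      finally show ?thesis .
    qed simp
  qed simp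
  also have "\<dots> \<ge> ereal (-K)" by (rule INF_greatest) (use low in auto)
  finally have "ereal (-K) \<le> Lim (at_left 1) (\<lambda>s. right_deriv E s)" .
  then show ?thesis unfolding E_def by (rule less_le_trans[rotated]) simp
qed

theorem lemmaA3:
  fixes H :: "real \<Rightarrow> real"
  assumes usc: "usc_on {0..1} H"
  shows "(Liminf (at_left 1) (\<lambda>t. ereal ((H t - H 1) / (t - 1))) > -\<infinity> \<longrightarrow>
            Lim (at_left 1) (\<lambda>s. right_deriv (concave_envelope H) s) > -\<infinity>)
       \<and> (Limsup (at_right 0) (\<lambda>t. ereal ((H t - H 0) / t)) < \<infinity> \<longrightarrow>
            right_deriv (concave_envelope H) 0 < \<infinity>)"
  using partA[OF usc] partB[OF usc] by blast

end
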